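(* Let $n\ge 2$, let $K$ be a field, and let $I(2,n)\subset K[x_{ij}:1\le i,j\le n]$ be the ideal generated by the $2$-minors of the generic $n\times n$ matrix $X=(x_{ij})$. Let $\succ$ be a reverse lexicographic term order induced by a total order of the variables in which $x_{11}\prec x_{22}\prec\cdots\prec x_{nn}$, every diagonal variable $x_{ii}$ is smaller than every off-diagonal variable $x_{ab}$ ($a\ne b$), and the off-diagonal variables are ordered so that $x_{ij}\succ x_{hk}$ whenever $|i-j|<|h-k|$. Let $H(2,n)$ be the monomial ideal generated by the following monomials, for all $i<h$ and $j<k$: (1) $x_{ik}x_{hj}$ whenever $i=j$ or $h=k$; (2) $x_{ij}x_{hk}$ whenever $i\neq j$ and $h\neq k$. Then $\operatorname{in}_\succ(I(2,n))=H(2,n)$.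
   Context: $\operatorname{in}_\succ(I)$ denotes the initial ideal of $I$ with respect to the term order $\succ$. *)

theory Defs
  imports "HOL-Library.Poly_Mapping"
begin

text \<open>Monomials are finitely supported exponent vectors, polynomials are finitely
  supported coefficient functions on monomials (convolution product).\<close>

type_synonym var = "nat \<times> nat"
type_synonym mon = "var \<Rightarrow>\<^sub>0 nat"
type_synonym 'a mpoly = "mon \<Rightarrow>\<^sub>0 'a"

definition matvars :: "nat \<Rightarrow> var set" where
  "matvars n = {1..n} \<times> {1..n}"

definition polyring :: "nat \<Rightarrow> ('a::field) mpoly set" where
  "polyring n = {p :: 'a mpoly. \<forall>m \<in> Poly_Mapping.keys p. Poly_Mapping.keys m \<subseteq> matvars n}"

definition monomial_poly :: "mon \<Rightarrow> ('a::field) mpoly" where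
  "monomial_poly m = Poly_Mapping.single m 1"

definition X :: "nat \<Rightarrow> nat \<Rightarrow> ('a::field) mpoly" where
  "X i j = monomial_poly (Poly_Mapping.single (i, j) 1)"

inductive_set ideal_gen :: "nat \<Rightarrow> ('a::field) mpoly set \<Rightarrow> 'a mpoly set"
  for n :: nat and G :: "'a mpoly set" where
  zero: "0 \<in> ideal_gen n G"
| gen: "g \<in> G \<Longrightarrow> g \<in> ideal_gen n G"
| add: "a \<in> ideal_gen n G \<Longrightarrow> b \<in> ideal_gen n G \<Longrightarrow> a + b \<in> ideal_gen n G"
| mult: "q \<in> polyring n \<Longrightarrow> a \<in> ideal_gen n G \<Longrightarrow> q * a \<in> ideal_gen n G"

definition minors2 :: "nat \<Rightarrow> ('a::field) mpoly set" where
  "minors2 n = {X i j * X h k - X i k * X h j | i j h k.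
      1 \<le> i \<and> i < h \<and> h \<le> n \<and> 1 \<le> j \<and> j < k \<and> k \<le> n}"

definition I2 :: "nat \<Rightarrow> ('a::field) mpoly set" where
  "I2 n = ideal_gen n (minors2 n)"

definition H2_gens :: "nat \<Rightarrow> ('a::field) mpoly set" where
  "H2_gens n =
     {X i k * X h j | i j h k.
        1 \<le> i \<and> i < h \<and> h \<le> n \<and> 1 \<le> j \<and> j < k \<and> k \<le> n \<and> (i = j \<or> h = k)}
   \<union> {X i j * X h k | i j h k.
        1 \<le> i \<and> i < h \<and> h \<le> n \<and> 1 \<le> j \<and> j < k \<and> k \<le> n \<and> i \<noteq> j \<and> h \<noteq> k}"

definition H2 :: "nat \<Rightarrow> ('a::field) mpoly set" where
  "H2 n = ideal_gen n (H2_gens n)"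

text \<open>A strict total order R on the variable set V (R x y means x is smaller than y).\<close>
definition strict_total_on :: "var set \<Rightarrow> (var \<Rightarrow> var \<Rightarrow> bool) \<Rightarrow> bool" where
  "strict_total_on V R \<longleftrightarrow>
     (\<forall>x\<in>V. \<not> R x x) \<and>
     (\<forall>x\<in>V. \<forall>y\<in>V. \<forall>z\<in>V. R x y \<longrightarrow> R y z \<longrightarrow> R x z) \<and>
     (\<forall>x\<in>V. \<forall>y\<in>V. x \<noteq> y \<longrightarrow> R x y \<or> R y x)"

definition mdeg :: "mon \<Rightarrow> nat" where
  "mdeg m = (\<Sum>x\<in>Poly_Mapping.keys m. Poly_Mapping.lookup m x)"

text \<open>The (degree) reverse lexicographic term order induced by the variable
  order R on V: u is smaller than v iff deg u < deg v, or the degrees agree and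
  at the R-smallest variable where the exponents differ, u has the larger exponent.\<close>
definition revlex_less :: "var set \<Rightarrow> (var \<Rightarrow> var \<Rightarrow> bool) \<Rightarrow> mon \<Rightarrow> mon \<Rightarrow> bool" where
  "revlex_less V R u v \<longleftrightarrow>
     mdeg u < mdeg v \<or>
     (mdeg u = mdeg v \<and>
      (\<exists>x\<in>V. Poly_Mapping.lookup u x \<noteq> Poly_Mapping.lookup v x \<and>
             (\<forall>y\<in>V. R y x \<longrightarrow> Poly_Mapping.lookup u y = Poly_Mapping.lookup v y) \<and>
             Poly_Mapping.lookup v x < Poly_Mapping.lookup u x))"

definition lead_mon :: "var set \<Rightarrow> (var \<Rightarrow> var \<Rightarrow> bool) \<Rightarrow> ('a::field) mpoly \<Rightarrow> mon" where
  "lead_mon V R p = (THE m. m \<in> Poly_Mapping.keys p \<and> (\<forall>m'\<in>Poly_Mapping.keys p. m' \<noteq> m \<longrightarrow> revlex_less V R m' m))"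

definition initial_ideal :: "nat \<Rightarrow> (var \<Rightarrow> var \<Rightarrow> bool) \<Rightarrow> ('a::field) mpoly set \<Rightarrow> 'a mpoly set" where
  "initial_ideal n R I =
     ideal_gen n {monomial_poly (lead_mon (matvars n) R f) | f. f \<in> I \<and> f \<noteq> 0}"

end

theory Submission
  imports Defs
begin


abbreviation lk :: "mon \<Rightarrow> var \<Rightarrow> nat" where "lk \<equiv> Poly_Mapping.lookup"

lemma mdeg_eq: "finite S \<Longrightarrow> Poly_Mapping.keys m \<subseteq> S \<Longrightarrow> mdeg m = (\<Sum>x\<in>S. lk m x)"
  unfolding mdeg_def
  by (rule sum.mono_neutral_left) (auto simp: in_keys_iff)

lemma mdeg_add: "mdeg (a + b) = mdeg a + mdeg b"
proof -
  define S where "S = Poly_Mapping.keys a \<union> Poly_Mapping.keys b"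
  have f: "finite S" unfolding S_def by simp
  have k: "Poly_Mapping.keys (a+b) \<subseteq> S" unfolding S_def by (rule keys_add)
  have ka: "Poly_Mapping.keys a \<subseteq> S" "Poly_Mapping.keys b \<subseteq> S" unfolding S_def by auto
  have "mdeg (a+b) = (\<Sum>x\<in>S. lk (a+b) x)" by (rule mdeg_eq[OF f k])
  also have "\<dots> = (\<Sum>x\<in>S. lk a x) + (\<Sum>x\<in>S. lk b x)" by (simp add: lookup_add sum.distrib)
  also have "\<dots> = mdeg a + mdeg b" using mdeg_eq[OF f ka(1)] mdeg_eq[OF f ka(2)] by simp
  finally show ?thesis .
qed

lemma min_exists:
  assumes "finite A" "A \<noteq> {}"
    and "\<And>x y z. x \<in> A \<Longrightarrow> y \<in> A \<Longrightarrow> z \<in> A \<Longrightarrow> r x y \<Longrightarrow> r y z \<Longrightarrow> r x z"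
    and "\<And>x. x \<in> A \<Longrightarrow> \<not> r x x"
  shows "\<exists>x\<in>A. \<forall>y\<in>A. \<not> r y x"
  using assms
proof (induction A rule: finite_ne_induct)
  case (singleton x) then show ?case by auto
next
  case (insert x F)
  have "\<exists>x\<in>F. \<forall>y\<in>F. \<not> r y x"
    by (rule insert.IH) (rule insert.prems; auto)+
  then obtain m where m: "m \<in> F" "\<forall>y\<in>F. \<not> r y m" by blast
  show ?case
  proof (cases "r x m")
    case True
    have "\<forall>y\<in>insert x F. \<not> r y x"
    proof
      fix y assume y: "y \<in> insert x F"
      show "\<not> r y x"
      proof
        assume "r y x"
        then have "r y m" using insert.prems(1)[of y x m] True y m(1) by blast
        then show False using y m insert.prems(2)[of x] \<open>r y x\<close> by auto
      qed
    qed
    then show ?thesis by blast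
  next
    case False
    then have "\<forall>y\<in>insert x F. \<not> r y m" using m by blast
    then show ?thesis using m(1) by blast
  qed
qed

context
  fixes V :: "var set" and R :: "var \<Rightarrow> var \<Rightarrow> bool"
  assumes tot: "strict_total_on V R"
begin

lemma R_irr: "x \<in> V \<Longrightarrow> \<not> R x x" using tot unfolding strict_total_on_def by blast
lemma R_trans: "x \<in> V \<Longrightarrow> y \<in> V \<Longrightarrow> z \<in> V \<Longrightarrow> R x y \<Longrightarrow> R y z \<Longrightarrow> R x z"
  using tot unfolding strict_total_on_def by blast
lemma R_tot: "x \<in> V \<Longrightarrow> y \<in> V \<Longrightarrow> x \<noteq> y \<Longrightarrow> R x y \<or> R y x"
  using tot unfolding strict_total_on_def by blast

lemma rl_irr: "\<not> revlex_less V R u u"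
  unfolding revlex_less_def by auto

lemma rl_trans:
  assumes "revlex_less V R u v" "revlex_less V R v w"
  shows "revlex_less V R u w"
proof (cases "mdeg u < mdeg v \<or> mdeg v < mdeg w")
  case True
  then show ?thesis using assms unfolding revlex_less_def by auto
next
  case False
  then have d: "mdeg u = mdeg v" "mdeg v = mdeg w" using assms unfolding revlex_less_def by auto
  from assms d obtain x1 where x1: "x1 \<in> V" "lk u x1 \<noteq> lk v x1"
    "\<forall>y\<in>V. R y x1 \<longrightarrow> lk u y = lk v y" "lk v x1 < lk u x1"
    unfolding revlex_less_def by auto
  from assms d obtain x2 where x2: "x2 \<in> V" "lk v x2 \<noteq> lk w x2"
    "\<forall>y\<in>V. R y x2 \<longrightarrow> lk v y = lk w y" "lk w x2 < lk v x2"
    unfolding revlex_less_def by auto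
  have E: "revlex_less V R u w" if "x \<in> V" "lk u x \<noteq> lk w x" "\<forall>y\<in>V. R y x \<longrightarrow> lk u y = lk w y"
     "lk w x < lk u x" for x
    unfolding revlex_less_def using d that by (intro disjI2 conjI bexI[of _ x]) auto
  consider "x1 = x2" | "R x1 x2" | "R x2 x1" using R_tot[OF x1(1) x2(1)] by blast
  then show ?thesis
  proof cases
    case 1
    show ?thesis
    proof (rule E[of x1])
      show "\<forall>y\<in>V. R y x1 \<longrightarrow> lk u y = lk w y" using x1 x2 1 by simp
    qed (use x1 x2 1 in auto)
  next
    case 2
    have a: "lk v x1 = lk w x1" using x2(3) x1(1) 2 by blast
    show ?thesis
    proof (rule E[of x1])
      show "\<forall>y\<in>V. R y x1 \<longrightarrow> lk u y = lk w y"
      proof (intro ballI impI)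
        fix y assume "y \<in> V" "R y x1"
        then have "R y x2" using R_trans[of y x1 x2] 2 x1(1) x2(1) by blast
        then show "lk u y = lk w y" using x1(3) x2(3) \<open>y \<in> V\<close> \<open>R y x1\<close> by simp
      qed
    qed (use x1 x2 a in auto)
  next
    case 3
    have a: "lk u x2 = lk v x2" using x1(3) x2(1) 3 by blast
    show ?thesis
    proof (rule E[of x2])
      show "\<forall>y\<in>V. R y x2 \<longrightarrow> lk u y = lk w y"
      proof (intro ballI impI)
        fix y assume "y \<in> V" "R y x2"
        then have "R y x1" using R_trans[of y x2 x1] 3 x1(1) x2(1) by blast
        then show "lk u y = lk w y" using x1(3) x2(3) \<open>y \<in> V\<close> \<open>R y x2\<close> by simp
      qed
    qed (use x1 x2 a in auto)
  qed
qed

lemma rl_asym: "revlex_less V R u v \<Longrightarrow> \<not> revlex_less V R v u"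
  using rl_trans rl_irr by blast

lemma rl_total:
  assumes fin: "finite V" and ku: "Poly_Mapping.keys u \<subseteq> V" and kv: "Poly_Mapping.keys v \<subseteq> V"
    and ne: "u \<noteq> v"
  shows "revlex_less V R u v \<or> revlex_less V R v u"
proof (cases "mdeg u = mdeg v")
  case False
  then show ?thesis unfolding revlex_less_def by auto
next
  case True
  let ?D = "{x\<in>V. lk u x \<noteq> lk v x}"
  have "?D \<noteq> {}"
  proof
    assume "?D = {}"
    have "lk u x = lk v x" for x
    proof (cases "x \<in> V")
      case True then show ?thesis using \<open>?D = {}\<close> by (metis (mono_tags, lifting) empty_iff mem_Collect_eq)
    next
      case False then show ?thesis using ku kv by (metis in_keys_iff subsetD)
    qed
    then show False using ne poly_mapping_eqI by blast
  qed
  then obtain x where x: "x \<in> ?D" "\<forall>y\<in>?D. \<not> R y x"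
  proof -
    have "\<exists>x\<in>?D. \<forall>y\<in>?D. \<not> R y x"
    proof (rule min_exists)
      show "finite ?D" using fin by simp
    next
      show "?D \<noteq> {}" by fact
    next
      fix x y z assume "x \<in> ?D" "y \<in> ?D" "z \<in> ?D" "R x y" "R y z"
      then show "R x z" using R_trans[of x y z] by blast
    next
      fix x assume "x \<in> ?D" then show "\<not> R x x" using R_irr by blast
    qed
    then show ?thesis using that by blast
  qed
  have below: "\<forall>y\<in>V. R y x \<longrightarrow> lk u y = lk v y" using x by auto
  show ?thesis
  proof (cases "lk v x < lk u x")
    case True
    have "revlex_less V R u v" unfolding revlex_less_def using \<open>mdeg u = mdeg v\<close> x below True by blast
    then show ?thesis by blast
  next
    case False
    then have "lk u x < lk v x" using x by auto
    have "revlex_less V R v u" unfolding revlex_less_def using \<open>mdeg u = mdeg v\<close> x below \<open>lk u x < lk v x\<close>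
      by (intro disjI2 conjI bexI[of _ x]) auto
    then show ?thesis by blast
  qed
qed

lemma rl_mult:
  assumes "revlex_less V R a b" shows "revlex_less V R (w + a) (w + b)"
proof -
  have "mdeg a < mdeg b \<or> (mdeg a = mdeg b \<and>
      (\<exists>x\<in>V. lk a x \<noteq> lk b x \<and> (\<forall>y\<in>V. R y x \<longrightarrow> lk a y = lk b y) \<and> lk b x < lk a x))"
    using assms unfolding revlex_less_def .
  then show ?thesis unfolding revlex_less_def mdeg_add lookup_add by simp
qed

end



definition FS :: "('a::field) mpoly \<Rightarrow> mon set \<Rightarrow> 'a" where
  "FS p B = sum (Poly_Mapping.lookup p) (Poly_Mapping.keys p \<inter> B)"

lemma FS_eq:
  assumes "finite S" "Poly_Mapping.keys p \<inter> B \<subseteq> S" "S \<subseteq> B"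
  shows "FS p B = sum (Poly_Mapping.lookup p) S"
  unfolding FS_def
  by (rule sum.mono_neutral_left) (use assms in \<open>auto simp: in_keys_iff\<close>)

lemma FS_add: "FS (p + q) B = FS p B + FS q B"
proof -
  define S where "S = (Poly_Mapping.keys p \<union> Poly_Mapping.keys q) \<inter> B"
  have f: "finite S" unfolding S_def by simp
  have "FS (p+q) B = sum (Poly_Mapping.lookup (p+q)) S"
    by (rule FS_eq[OF f]) (use keys_add[of p q] in \<open>auto simp: S_def\<close>)
  also have "\<dots> = sum (Poly_Mapping.lookup p) S + sum (Poly_Mapping.lookup q) S"
    by (simp add: lookup_add sum.distrib)
  also have "sum (Poly_Mapping.lookup p) S = FS p B"
    by (rule FS_eq[OF f, symmetric]) (auto simp: S_def)
  also have "sum (Poly_Mapping.lookup q) S = FS q B"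
    by (rule FS_eq[OF f, symmetric]) (auto simp: S_def)
  finally show ?thesis .
qed

lemma FS_zero[simp]: "FS 0 B = 0" unfolding FS_def by simp

lemma FS_sum: "FS (sum f I) B = (\<Sum>i\<in>I. FS (f i) B)"
  by (induction I rule: infinite_finite_induct) (auto simp: FS_add)

lemma lookup_single_mult:
  fixes l r :: mon and a :: "'b::field mpoly"
  shows "Poly_Mapping.lookup (Poly_Mapping.single l c * a) (l + r) = c * Poly_Mapping.lookup a r"
proof -
  have "Poly_Mapping.lookup (Poly_Mapping.single l c * a) (l + r) =
     (\<Sum>l'. (c when l = l') * (\<Sum>q. Poly_Mapping.lookup a q when l + r = l' + q))"
    by (simp add: lookup_mult lookup_single)
  also have "\<dots> = (\<Sum>l'. (c * (\<Sum>q. Poly_Mapping.lookup a q when l + r = l' + q)) when l = l')"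
    by (simp add: when_mult)
  also have "\<dots> = c * (\<Sum>q. Poly_Mapping.lookup a q when l + r = l + q)"
    by (rule Sum_any_when_equal')
  also have "(\<Sum>q. Poly_Mapping.lookup a q when l + r = l + q) = Poly_Mapping.lookup a r"
  proof -
    have "\<And>q. (Poly_Mapping.lookup a q when l + r = l + q) = (Poly_Mapping.lookup a q when r = q)"
      by (rule when_cong) auto
    then show ?thesis by simp
  qed
  finally show ?thesis .
qed

lemma keys_single_mult:
  "Poly_Mapping.keys (Poly_Mapping.single l c * (a :: 'b::field mpoly)) \<subseteq> (\<lambda>r. l + r) ` Poly_Mapping.keys a"
proof -
  have "Poly_Mapping.keys (Poly_Mapping.single l c * a) \<subseteq> {x + y | x y. x \<in> Poly_Mapping.keys (Poly_Mapping.single l c) \<and> y \<in> Poly_Mapping.keys a}"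
    by (rule keys_mult)
  also have "\<dots> \<subseteq> (\<lambda>r. l + r) ` Poly_Mapping.keys a" by (auto split: if_splits)
  finally show ?thesis .
qed

lemma FS_single_mult:
  "FS (Poly_Mapping.single l c * (a :: 'b::field mpoly)) B = c * FS a {r. l + r \<in> B}"
proof -
  define S where "S = Poly_Mapping.keys a \<inter> {r. l + r \<in> B}"
  have fin: "finite ((\<lambda>r. l + r) ` S)" unfolding S_def by simp
  have "FS (Poly_Mapping.single l c * a) B = sum (Poly_Mapping.lookup (Poly_Mapping.single l c * a)) ((\<lambda>r. l + r) ` S)"
    by (rule FS_eq[OF fin]) (use keys_single_mult[of l c a] in \<open>auto simp: S_def\<close>)
  also have "\<dots> = sum (\<lambda>r. Poly_Mapping.lookup (Poly_Mapping.single l c * a) (l + r)) S"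
    by (subst sum.reindex) (auto simp: inj_on_def)
  also have "\<dots> = sum (\<lambda>r. c * Poly_Mapping.lookup a r) S" by (simp add: lookup_single_mult)
  also have "\<dots> = c * FS a {r. l + r \<in> B}" by (simp add: FS_def S_def sum_distrib_left)
  finally show ?thesis .
qed

lemma poly_decomp: "(p::'b::field mpoly) = (\<Sum>l\<in>Poly_Mapping.keys p. Poly_Mapping.single l (Poly_Mapping.lookup p l))"
proof (rule poly_mapping_eqI)
  fix k
  have "Poly_Mapping.lookup (\<Sum>l\<in>Poly_Mapping.keys p. Poly_Mapping.single l (Poly_Mapping.lookup p l)) k
     = (\<Sum>l\<in>Poly_Mapping.keys p. (Poly_Mapping.lookup p l when l = k))"
    by (simp add: lookup_sum lookup_single)
  also have "\<dots> = Poly_Mapping.lookup p k"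
  proof (cases "k \<in> Poly_Mapping.keys p")
    case True
    then show ?thesis by (simp add: when_def sum.delta)
  next
    case False
    then show ?thesis by (auto simp: when_def in_keys_iff intro!: sum.neutral)
  qed
  finally show "Poly_Mapping.lookup p k = Poly_Mapping.lookup (\<Sum>l\<in>Poly_Mapping.keys p. Poly_Mapping.single l (Poly_Mapping.lookup p l)) k" by simp
qed

lemma FS_mult:
  "FS ((q::'b::field mpoly) * a) B = (\<Sum>l\<in>Poly_Mapping.keys q. Poly_Mapping.lookup q l * FS a {r. l + r \<in> B})"
proof -
  have "q * a = (\<Sum>l\<in>Poly_Mapping.keys q. Poly_Mapping.single l (Poly_Mapping.lookup q l) * a)"
    by (subst poly_decomp[of q]) (simp add: sum_distrib_right)
  then show ?thesis by (simp add: FS_sum FS_single_mult)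
qed



definition pm :: "var \<Rightarrow> var \<Rightarrow> mon" where
  "pm p q = Poly_Mapping.single p 1 + Poly_Mapping.single q 1"

definition hmons :: "nat \<Rightarrow> mon set" where
  "hmons n =
     {pm (i, k) (h, j) | i j h k.
        1 \<le> i \<and> i < h \<and> h \<le> n \<and> 1 \<le> j \<and> j < k \<and> k \<le> n \<and> (i = j \<or> h = k)}
   \<union> {pm (i, j) (h, k) | i j h k.
        1 \<le> i \<and> i < h \<and> h \<le> n \<and> 1 \<le> j \<and> j < k \<and> k \<le> n \<and> i \<noteq> j \<and> h \<noteq> k}"

definition rs :: "nat \<Rightarrow> mon \<Rightarrow> nat \<Rightarrow> nat" where
  "rs n m t = (\<Sum>j\<in>{1..n}. lk m (t, j))"

definition cs :: "nat \<Rightarrow> mon \<Rightarrow> nat \<Rightarrow> nat" where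
  "cs n m t = (\<Sum>i\<in>{1..n}. lk m (i, t))"

definition stdm :: "nat \<Rightarrow> mon \<Rightarrow> bool" where
  "stdm n m \<longleftrightarrow> \<not> (\<exists>u g. g \<in> hmons n \<and> m = u + g)"

lemma hm1: "1 \<le> i \<Longrightarrow> i < h \<Longrightarrow> h \<le> n \<Longrightarrow> 1 \<le> j \<Longrightarrow> j < k \<Longrightarrow> k \<le> n \<Longrightarrow> i = j \<or> h = k
  \<Longrightarrow> pm (i, k) (h, j) \<in> hmons n"
  unfolding hmons_def by blast

lemma hm2: "1 \<le> i \<Longrightarrow> i < h \<Longrightarrow> h \<le> n \<Longrightarrow> 1 \<le> j \<Longrightarrow> j < k \<Longrightarrow> k \<le> n \<Longrightarrow> i \<noteq> j \<Longrightarrow> h \<noteq> k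
  \<Longrightarrow> pm (i, j) (h, k) \<in> hmons n"
  unfolding hmons_def by blast

lemma pm_comm: "pm p q = pm q p"
  unfolding pm_def by (simp add: add.commute)

lemma lk_pm: "lk (pm p q) x = (if p = x then 1 else 0) + (if q = x then 1 else 0)"
  unfolding pm_def by (simp add: lookup_add lookup_single when_def)

lemma keys_pm: "Poly_Mapping.keys (pm p q) = {p, q}"
  by (auto simp: in_keys_iff lk_pm split: if_splits)

lemma rs_add: "rs n (a + b) t = rs n a t + rs n b t"
  unfolding rs_def by (simp add: lookup_add sum.distrib)

lemma cs_add: "cs n (a + b) t = cs n a t + cs n b t"
  unfolding cs_def by (simp add: lookup_add sum.distrib)

lemma rs_single: "rs n (Poly_Mapping.single (a, b) 1) t = (if a = t \<and> b \<in> {1..n} then 1 else 0)"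
  unfolding rs_def lookup_single when_def by (cases "a = t") (simp_all add: sum.delta)

lemma cs_single: "cs n (Poly_Mapping.single (a, b) 1) t = (if b = t \<and> a \<in> {1..n} then 1 else 0)"
  unfolding cs_def lookup_single when_def by (cases "b = t") (simp_all add: sum.delta)

lemma lk_le_rs: "j \<in> {1..n} \<Longrightarrow> lk m (t, j) \<le> rs n m t"
  unfolding rs_def by (rule member_le_sum) auto

lemma lk_le_cs: "i \<in> {1..n} \<Longrightarrow> lk m (i, t) \<le> cs n m t"
  unfolding cs_def by (rule member_le_sum) auto

lemma rs_pos: "\<exists>j\<in>{1..n}. lk m (t, j) > 0" if "rs n m t > 0"
proof (rule ccontr)
  assume "\<not> (\<exists>j\<in>{1..n}. lk m (t, j) > 0)"
  then have "\<forall>j\<in>{1..n}. lk m (t, j) = 0" by auto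
  then show False using that unfolding rs_def by simp
qed

lemma cs_pos: "\<exists>i\<in>{1..n}. lk m (i, t) > 0" if "cs n m t > 0"
proof (rule ccontr)
  assume "\<not> (\<exists>i\<in>{1..n}. lk m (i, t) > 0)"
  then have "\<forall>i\<in>{1..n}. lk m (i, t) = 0" by auto
  then show False using that unfolding cs_def by simp
qed

lemma split2:
  assumes "p \<noteq> q" "lk m p > 0" "lk m q > 0"
  shows "m = (m - pm p q) + pm p q"
proof (rule poly_mapping_eqI)
  fix x
  show "lk m x = lk (m - pm p q + pm p q) x"
    using assms by (auto simp: lookup_add lookup_minus lk_pm)
qed

lemma split1:
  assumes "lk m p > 0"
  shows "m = Poly_Mapping.single p 1 + (m - Poly_Mapping.single p 1)"
proof (rule poly_mapping_eqI)
  fix x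
  show "lk m x = lk (Poly_Mapping.single p 1 + (m - Poly_Mapping.single p 1)) x"
    using assms by (auto simp: lookup_add lookup_minus lookup_single when_def)
qed

lemma not_std:
  assumes "g \<in> hmons n" "p \<noteq> q" "lk m p > 0" "lk m q > 0" "g = pm p q"
  shows "\<not> stdm n m"
  unfolding stdm_def using split2[OF assms(2-4)] assms(1,5) by blast

lemma diag_forced:
  assumes std: "stdm n m" and t: "t \<in> {1..n}" and r: "rs n m t > 0" and c: "cs n m t > 0"
  shows "lk m (t, t) > 0"
proof (rule ccontr)
  assume "\<not> lk m (t, t) > 0"
  obtain y where y: "y \<in> {1..n}" "lk m (t, y) > 0" using rs_pos[OF r] by blast
  obtain x where x: "x \<in> {1..n}" "lk m (x, t) > 0" using cs_pos[OF c] by blast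
  have yt: "y \<noteq> t" using y \<open>\<not> lk m (t, t) > 0\<close> by auto
  have xt: "x \<noteq> t" using x \<open>\<not> lk m (t, t) > 0\<close> by auto
  have ne: "(t, y) \<noteq> (x, t)" using xt by auto
  have "pm (t, y) (x, t) \<in> hmons n"
  proof (cases "t < y")
    case True
    show ?thesis
    proof (cases "t < x")
      case True
      show ?thesis using hm1[of t x n t y] \<open>t < y\<close> True t x y by auto
    next
      case False
      then have "x < t" using xt by auto
      show ?thesis using hm2[of x t n t y] \<open>t < y\<close> \<open>x < t\<close> t x y xt yt pm_comm by auto
    qed
  next
    case False
    then have "y < t" using yt by auto
    show ?thesis
    proof (cases "t < x")
      case True
      show ?thesis using hm2[of t x n y t] \<open>y < t\<close> True t x y xt yt by auto
    next
      case False
      then have "x < t" using xt by auto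
      show ?thesis using hm1[of x t n y t] \<open>y < t\<close> \<open>x < t\<close> t x y pm_comm by auto
    qed
  qed
  then show False using not_std[OF _ ne y(2) x(2)] std by blast
qed

lemma corner_forced:
  assumes std: "stdm n m"
    and nd: "\<forall>t\<in>{1..n}. \<not> (rs n m t > 0 \<and> cs n m t > 0)"
    and a: "a \<in> {1..n}" "rs n m a > 0" "\<forall>t\<in>{1..n}. rs n m t > 0 \<longrightarrow> a \<le> t"
    and b: "b \<in> {1..n}" "cs n m b > 0" "\<forall>t\<in>{1..n}. cs n m t > 0 \<longrightarrow> t \<le> b"
  shows "lk m (a, b) > 0"
proof (rule ccontr)
  assume z: "\<not> lk m (a, b) > 0"
  obtain y where y: "y \<in> {1..n}" "lk m (a, y) > 0" using rs_pos[OF a(2)] by blast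
  obtain x where x: "x \<in> {1..n}" "lk m (x, b) > 0" using cs_pos[OF b(2)] by blast
  have "cs n m y > 0" using lk_le_cs[of a n m y] a(1) y by linarith
  then have "y \<le> b" using b(3) y(1) by blast
  moreover have "y \<noteq> b" using y z by auto
  ultimately have yb: "y < b" by auto
  have "rs n m x > 0" using lk_le_rs[of b n m x] b(1) x by linarith
  then have "a \<le> x" using a(3) x(1) by blast
  moreover have "x \<noteq> a" using x z by auto
  ultimately have ax: "a < x" by auto
  have ay: "a \<noteq> y" using nd a(1,2) \<open>cs n m y > 0\<close> by metis
  have xb: "x \<noteq> b" using nd b(1,2) \<open>rs n m x > 0\<close> by metis
  have "pm (a, y) (x, b) \<in> hmons n" using hm2[of a x n y b] ax yb a(1) b(1) x(1) y(1) ay xb by auto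
  moreover have "(a, y) \<noteq> (x, b)" using ax by auto
  ultimately show False using not_std[OF _ _ y(2) x(2)] std by blast
qed


lemma keys_sub_lk: "(\<And>x. lk u x \<le> lk m x) \<Longrightarrow> Poly_Mapping.keys u \<subseteq> Poly_Mapping.keys m"
  by (metis in_keys_iff le_zero_eq subsetI)

lemma keys_sum_sub: "Poly_Mapping.keys (u + g :: mon) = Poly_Mapping.keys u \<union> Poly_Mapping.keys g"
  by (auto simp: in_keys_iff lookup_add)

lemma std_dvd: "stdm n (v + m) \<Longrightarrow> stdm n m"
  unfolding stdm_def by (metis add.assoc)

lemma forced_pos:
  assumes km: "Poly_Mapping.keys m \<subseteq> matvars n" and m0: "m \<noteq> 0"
    and sm: "stdm n m" and sm': "stdm n m'"
    and er: "rs n m = rs n m'" and ec: "cs n m = cs n m'"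
  shows "\<exists>p. lk m p > 0 \<and> lk m' p > 0"
proof (cases "\<exists>t\<in>{1..n}. rs n m t > 0 \<and> cs n m t > 0")
  case True
  then obtain t where t: "t \<in> {1..n}" "rs n m t > 0" "cs n m t > 0" by blast
  have "lk m (t,t) > 0" using diag_forced[OF sm t] .
  moreover have "lk m' (t,t) > 0"
  proof (rule diag_forced[OF sm' t(1)])
    show "rs n m' t > 0" using t(2) er by simp
    show "cs n m' t > 0" using t(3) ec by simp
  qed
  ultimately show ?thesis by blast
next
  case False
  then have nd: "\<forall>t\<in>{1..n}. \<not> (rs n m t > 0 \<and> cs n m t > 0)" by blast
  obtain x where x: "x \<in> Poly_Mapping.keys m" using m0 by (metis all_not_in_conv keys_eq_empty)
  obtain a0 b0 where ab0: "x = (a0, b0)" by (cases x)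
  have ab0V: "a0 \<in> {1..n}" "b0 \<in> {1..n}" using x km ab0 by (auto simp: matvars_def)
  have "lk m (a0, b0) > 0" using x ab0 by (simp add: in_keys_iff)
  then have r0: "rs n m a0 > 0" and c0: "cs n m b0 > 0"
    using lk_le_rs[OF ab0V(2), of m a0] lk_le_cs[OF ab0V(1), of m b0] by linarith+
  define A where "A = {t\<in>{1..n}. rs n m t > 0}"
  define B where "B = {t\<in>{1..n}. cs n m t > 0}"
  have fA: "finite A" "A \<noteq> {}" using r0 ab0V unfolding A_def by auto
  have fB: "finite B" "B \<noteq> {}" using c0 ab0V unfolding B_def by auto
  define a where "a = Min A"
  define b where "b = Max B"
  have aA: "a \<in> A" using Min_in[OF fA] a_def by simp
  have bB: "b \<in> B" using Max_in[OF fB] b_def by simp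
  have amin: "\<forall>t\<in>{1..n}. rs n m t > 0 \<longrightarrow> a \<le> t" using Min_le[OF fA(1)] unfolding a_def A_def by auto
  have bmax: "\<forall>t\<in>{1..n}. cs n m t > 0 \<longrightarrow> t \<le> b" using Max_ge[OF fB(1)] unfolding b_def B_def by auto
  have a1: "a \<in> {1..n}" "rs n m a > 0" using aA unfolding A_def by auto
  have b1: "b \<in> {1..n}" "cs n m b > 0" using bB unfolding B_def by auto
  have "lk m (a, b) > 0" using corner_forced[OF sm nd a1 amin b1 bmax] .
  moreover have "lk m' (a, b) > 0"
    using corner_forced[OF sm', of a b] nd a1 amin b1 bmax unfolding er ec by blast
  ultimately show ?thesis by blast
qed

lemma std_inj_aux:
  "\<forall>m m'. N = (\<Sum>t\<in>{1..n}. rs n m t) \<longrightarrow> Poly_Mapping.keys m \<subseteq> matvars n \<longrightarrow>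
     Poly_Mapping.keys m' \<subseteq> matvars n \<longrightarrow> stdm n m \<longrightarrow> stdm n m' \<longrightarrow>
     rs n m = rs n m' \<longrightarrow> cs n m = cs n m' \<longrightarrow> m = m'"
proof (induction N rule: less_induct)
  case (less N)
  show ?case
  proof (intro allI impI)
    fix m m' assume N: "N = (\<Sum>t\<in>{1..n}. rs n m t)" and km: "Poly_Mapping.keys m \<subseteq> matvars n"
      and km': "Poly_Mapping.keys m' \<subseteq> matvars n" and sm: "stdm n m" and sm': "stdm n m'"
      and er: "rs n m = rs n m'" and ec: "cs n m = cs n m'"
    show "m = m'"
    proof (cases "m = 0")
      case True
      have "Poly_Mapping.keys m' = {}"
      proof (rule ccontr)
        assume "Poly_Mapping.keys m' \<noteq> {}"
        then obtain a b where ab: "(a,b) \<in> Poly_Mapping.keys m'" by (metis ex_in_conv prod.collapse)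
        then have abV: "a \<in> {1..n}" "b \<in> {1..n}" using km' by (auto simp: matvars_def)
        have "lk m' (a,b) > 0" using ab by (simp add: in_keys_iff)
        moreover have "lk m' (a,b) \<le> rs n m' a" by (rule lk_le_rs[OF abV(2)])
        moreover have "rs n m' a = 0" using er True by (metis rs_def lookup_zero sum.neutral)
        ultimately show False by linarith
      qed
      then show ?thesis using True by simp
    next
      case False
      obtain p where p: "lk m p > 0" "lk m' p > 0" using forced_pos[OF km False sm sm' er ec] by blast
      obtain a b where pab: "p = (a,b)" by (cases p)
      have "p \<in> Poly_Mapping.keys m" using p(1) by (simp add: in_keys_iff)
      then have "p \<in> matvars n" using km by blast
      then have pV: "a \<in> {1..n}" "b \<in> {1..n}" using pab by (auto simp: matvars_def)
      define m1 where "m1 = m - Poly_Mapping.single p 1"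
      define m1' where "m1' = m' - Poly_Mapping.single p 1"
      have e1: "m = Poly_Mapping.single p 1 + m1" unfolding m1_def by (rule split1[OF p(1)])
      have e1': "m' = Poly_Mapping.single p 1 + m1'" unfolding m1'_def by (rule split1[OF p(2)])
      have k1: "Poly_Mapping.keys m1 \<subseteq> matvars n" using km e1 keys_sum_sub by blast
      have k1': "Poly_Mapping.keys m1' \<subseteq> matvars n" using km' e1' keys_sum_sub by blast
      have s1: "stdm n m1" using sm e1 std_dvd by metis
      have s1': "stdm n m1'" using sm' e1' std_dvd by metis
      have r1: "rs n m1 = rs n m1'"
      proof
        fix t
        have "rs n m t = rs n m' t" using er by simp
        moreover have "rs n m t = rs n (Poly_Mapping.single p 1) t + rs n m1 t" by (subst e1) (rule rs_add)
        moreover have "rs n m' t = rs n (Poly_Mapping.single p 1) t + rs n m1' t" by (subst e1') (rule rs_add)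
        ultimately show "rs n m1 t = rs n m1' t" by simp
      qed
      have c1: "cs n m1 = cs n m1'"
      proof
        fix t
        have "cs n m t = cs n m' t" using ec by simp
        moreover have "cs n m t = cs n (Poly_Mapping.single p 1) t + cs n m1 t" by (subst e1) (rule cs_add)
        moreover have "cs n m' t = cs n (Poly_Mapping.single p 1) t + cs n m1' t" by (subst e1') (rule cs_add)
        ultimately show "cs n m1 t = cs n m1' t" by simp
      qed
      have "N = (\<Sum>t\<in>{1..n}. rs n (Poly_Mapping.single p 1) t) + (\<Sum>t\<in>{1..n}. rs n m1 t)"
        unfolding N by (subst e1) (simp add: rs_add sum.distrib)
      moreover have "(\<Sum>t\<in>{1..n}. rs n (Poly_Mapping.single p 1) t) \<ge> 1"
      proof -
        have "rs n (Poly_Mapping.single p 1) a = 1" using pab pV rs_single[of n a b a] by auto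
        moreover have "rs n (Poly_Mapping.single p 1) a \<le> (\<Sum>t\<in>{1..n}. rs n (Poly_Mapping.single p 1) t)"
          by (rule member_le_sum) (use pV in auto)
        ultimately show ?thesis by linarith
      qed
      ultimately have "(\<Sum>t\<in>{1..n}. rs n m1 t) < N" by linarith
      then have "m1 = m1'" using less.IH k1 k1' s1 s1' r1 c1 by blast
      then show ?thesis using e1 e1' by simp
    qed
  qed
qed

lemma std_inj:
  "Poly_Mapping.keys m \<subseteq> matvars n \<Longrightarrow> Poly_Mapping.keys m' \<subseteq> matvars n \<Longrightarrow> stdm n m \<Longrightarrow> stdm n m' \<Longrightarrow>
     rs n m = rs n m' \<Longrightarrow> cs n m = cs n m' \<Longrightarrow> m = m'"
  using std_inj_aux by blast


lemma mdeg_pm: "p \<noteq> q \<Longrightarrow> mdeg (pm p q) = 2"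
  by (subst mdeg_eq[of "{p,q}"]) (auto simp: keys_pm lk_pm)

lemma rl_pm:
  assumes tot: "strict_total_on V R"
    and V: "p1 \<in> V" "p2 \<in> V" "q1 \<in> V" "q2 \<in> V"
    and d: "p1 \<noteq> p2" "q1 \<noteq> q2" "q1 \<noteq> p1" "q1 \<noteq> p2" "q2 \<noteq> p1" "q2 \<noteq> p2"
    and q: "q = q1 \<or> q = q2" "R q p1" "R q p2"
  shows "revlex_less V R (pm q1 q2) (pm p1 p2)"
proof -
  have "\<exists>x. (x = q1 \<or> x = q2) \<and> R x p1 \<and> R x p2 \<and> \<not> R q1 x \<and> \<not> R q2 x"
  proof (cases "q = q1")
    case True
    show ?thesis
    proof (cases "R q2 q1")
      case True
      then have "R q2 p1" "R q2 p2" using R_trans[OF tot V(4) V(3) V(1)] R_trans[OF tot V(4) V(3) V(2)] q \<open>q = q1\<close> by auto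
      moreover have "\<not> R q1 q2" using True R_trans[OF tot V(3) V(4) V(3)] R_irr[OF tot V(3)] by blast
      ultimately show ?thesis using R_irr[OF tot V(4)] by blast
    next
      case False
      then show ?thesis using q True R_irr[OF tot V(3)] by blast
    qed
  next
    case False
    then have qq: "q = q2" using q by blast
    show ?thesis
    proof (cases "R q1 q2")
      case True
      then have "R q1 p1" "R q1 p2" using R_trans[OF tot V(3) V(4) V(1)] R_trans[OF tot V(3) V(4) V(2)] q qq by auto
      moreover have "\<not> R q2 q1" using True R_trans[OF tot V(4) V(3) V(4)] R_irr[OF tot V(4)] by blast
      ultimately show ?thesis using R_irr[OF tot V(3)] by blast
    next
      case False
      then show ?thesis using q qq R_irr[OF tot V(4)] by blast
    qed
  qed
  then obtain x where x: "x = q1 \<or> x = q2" "R x p1" "R x p2" "\<not> R q1 x" "\<not> R q2 x" by blast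
  have xV: "x \<in> V" using x(1) V by blast
  have below: "\<forall>y\<in>V. R y x \<longrightarrow> lk (pm q1 q2) y = lk (pm p1 p2) y"
  proof (intro ballI impI)
    fix y assume y: "y \<in> V" "R y x"
    have "y \<noteq> p1" using y x(2) R_trans[OF tot V(1) xV V(1)] R_irr[OF tot V(1)] by blast
    moreover have "y \<noteq> p2" using y x(3) R_trans[OF tot V(2) xV V(2)] R_irr[OF tot V(2)] by blast
    moreover have "y \<noteq> q1" "y \<noteq> q2" using y x by auto
    ultimately show "lk (pm q1 q2) y = lk (pm p1 p2) y" by (simp add: lk_pm)
  qed
  have l1: "lk (pm q1 q2) x = 1" using x(1) d(2) by (auto simp: lk_pm)
  have l2: "lk (pm p1 p2) x = 0" using x(1) d by (auto simp: lk_pm)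
  show ?thesis unfolding revlex_less_def
    using mdeg_pm[OF d(1)] mdeg_pm[OF d(2)] xV below l1 l2
    by (intro disjI2 conjI bexI[of _ x]) auto
qed

lemma dist_lemma:
  fixes i j h k :: nat
  assumes "i < h" "j < k"
  shows "(\<bar>int i - int j\<bar> < \<bar>int i - int k\<bar> \<and> \<bar>int h - int k\<bar> < \<bar>int i - int k\<bar>) \<or>
         (\<bar>int i - int j\<bar> < \<bar>int h - int j\<bar> \<and> \<bar>int h - int k\<bar> < \<bar>int h - int j\<bar>)"
  using assms by (auto simp: abs_if)

lemma X_mult: "X a b * X c d = monomial_poly (pm (a, b) (c, d))"
  by (simp add: X_def monomial_poly_def mult_single pm_def)

lemma H2_gens_eq: "H2_gens n = monomial_poly ` hmons n"
  unfolding H2_gens_def hmons_def X_mult by blast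

lemma rs_pm: "b \<in> {1..n} \<Longrightarrow> d \<in> {1..n} \<Longrightarrow> rs n (pm (a,b) (c,d)) t = (if a = t then 1 else 0) + (if c = t then 1 else 0)"
  unfolding pm_def rs_add rs_single by simp

lemma cs_pm: "a \<in> {1..n} \<Longrightarrow> c \<in> {1..n} \<Longrightarrow> cs n (pm (a,b) (c,d)) t = (if b = t then 1 else 0) + (if d = t then 1 else 0)"
  unfolding pm_def cs_add cs_single by simp

lemma keys_mp_diff:
  assumes "A \<noteq> B"
  shows "Poly_Mapping.keys (monomial_poly A - monomial_poly B :: ('a::field) mpoly) = {A, B}"
  using assms by (auto simp: monomial_poly_def in_keys_iff lookup_minus lookup_single when_def split: if_splits)

lemma lead_eq:
  assumes tot: "strict_total_on V R" and m: "m \<in> Poly_Mapping.keys p"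
    and mx: "\<forall>m'\<in>Poly_Mapping.keys p. m' \<noteq> m \<longrightarrow> revlex_less V R m' m"
  shows "lead_mon V R p = m"
  unfolding lead_mon_def
proof (rule the_equality)
  show "m \<in> Poly_Mapping.keys p \<and> (\<forall>m'\<in>Poly_Mapping.keys p. m' \<noteq> m \<longrightarrow> revlex_less V R m' m)"
    using m mx by blast
next
  fix m2 assume m2: "m2 \<in> Poly_Mapping.keys p \<and> (\<forall>m'\<in>Poly_Mapping.keys p. m' \<noteq> m2 \<longrightarrow> revlex_less V R m' m2)"
  show "m2 = m"
  proof (rule ccontr)
    assume "m2 \<noteq> m"
    then have "revlex_less V R m2 m" "revlex_less V R m m2" using m2 mx m by auto
    then show False using rl_asym[OF tot] by blast
  qed
qed

lemma ideal_gen_sub: "G \<subseteq> ideal_gen n G' \<Longrightarrow> ideal_gen n G \<subseteq> ideal_gen n G'"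
proof
  fix x assume G: "G \<subseteq> ideal_gen n G'" and x: "x \<in> ideal_gen n G"
  from x show "x \<in> ideal_gen n G'"
    by (induction rule: ideal_gen.induct) (use G in \<open>auto intro: ideal_gen.intros\<close>)
qed

lemma minor_form:
  "f \<in> minors2 n \<Longrightarrow> \<exists>i j h k. 1 \<le> i \<and> i < h \<and> h \<le> n \<and> 1 \<le> j \<and> j < k \<and> k \<le> n \<and>
      f = monomial_poly (pm (i,j) (h,k)) - monomial_poly (pm (i,k) (h,j))"
  unfolding minors2_def X_mult by blast

lemma pm_ne: "i < h \<Longrightarrow> j < k \<Longrightarrow> pm (i,j) (h,k) \<noteq> pm (i,k) (h,j)"
proof
  assume "i < h" "j < k" "pm (i,j) (h,k) = pm (i,k) (h,j)"
  then have "lk (pm (i,j) (h,k)) (i,j) = lk (pm (i,k) (h,j)) (i,j)" by simp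
  then show False using \<open>i < h\<close> \<open>j < k\<close> by (simp add: lk_pm)
qed

lemma ideal_polyring: "f \<in> ideal_gen n (minors2 n) \<Longrightarrow> f \<in> polyring n"
proof (induction rule: ideal_gen.induct)
  case zero
  then show ?case by (simp add: polyring_def)
next
  case (gen g)
  then obtain i j h k where ijhk: "1 \<le> i" "i < h" "h \<le> n" "1 \<le> j" "j < k" "k \<le> n"
      "g = monomial_poly (pm (i,j) (h,k)) - monomial_poly (pm (i,k) (h,j))"
    using minor_form by blast
  have "Poly_Mapping.keys g = {pm (i,j) (h,k), pm (i,k) (h,j)}"
    unfolding ijhk(7) by (rule keys_mp_diff[OF pm_ne[OF ijhk(2) ijhk(5)]])
  moreover have "Poly_Mapping.keys (pm (i,j) (h,k)) \<subseteq> matvars n" "Poly_Mapping.keys (pm (i,k) (h,j)) \<subseteq> matvars n"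
    unfolding keys_pm matvars_def using ijhk(1-6) by auto
  ultimately show ?case unfolding polyring_def by auto
next
  case (add a b)
  have ka: "\<forall>m\<in>Poly_Mapping.keys a. Poly_Mapping.keys m \<subseteq> matvars n" using add.IH(1) unfolding polyring_def by simp
  have kb: "\<forall>m\<in>Poly_Mapping.keys b. Poly_Mapping.keys m \<subseteq> matvars n" using add.IH(2) unfolding polyring_def by simp
  have "\<forall>m\<in>Poly_Mapping.keys (a + b). Poly_Mapping.keys m \<subseteq> matvars n"
  proof
    fix m assume "m \<in> Poly_Mapping.keys (a + b)"
    then have "m \<in> Poly_Mapping.keys a \<or> m \<in> Poly_Mapping.keys b" using keys_add[of a b] by blast
    then show "Poly_Mapping.keys m \<subseteq> matvars n" using ka kb by blast
  qed
  then show ?case unfolding polyring_def by simp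
next
  case (mult q a)
  have kq: "\<forall>m\<in>Poly_Mapping.keys q. Poly_Mapping.keys m \<subseteq> matvars n" using mult.hyps(1) unfolding polyring_def by simp
  have ka: "\<forall>m\<in>Poly_Mapping.keys a. Poly_Mapping.keys m \<subseteq> matvars n" using mult.IH unfolding polyring_def by simp
  have "\<forall>m\<in>Poly_Mapping.keys (q * a). Poly_Mapping.keys m \<subseteq> matvars n"
  proof
    fix m assume "m \<in> Poly_Mapping.keys (q * a)"
    then have "m \<in> {x + y | x y. x \<in> Poly_Mapping.keys q \<and> y \<in> Poly_Mapping.keys a}"
      using keys_mult[of q a] by blast
    then obtain x y where xy: "x \<in> Poly_Mapping.keys q" "y \<in> Poly_Mapping.keys a" "m = x + y"
      by blast
    have "Poly_Mapping.keys x \<subseteq> matvars n" using xy(1) kq by blast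
    moreover have "Poly_Mapping.keys y \<subseteq> matvars n" using xy(2) ka by blast
    ultimately show "Poly_Mapping.keys m \<subseteq> matvars n" unfolding xy(3) keys_sum_sub by blast
  qed
  then show ?case unfolding polyring_def by simp
qed

lemma FS_diff:
  assumes "A \<noteq> B" "A \<in> S \<longleftrightarrow> B \<in> S"
  shows "FS (monomial_poly A - monomial_poly B :: ('a::field) mpoly) S = 0"
proof (cases "A \<in> S")
  case True
  have "FS (monomial_poly A - monomial_poly B :: 'a mpoly) S
     = sum (Poly_Mapping.lookup (monomial_poly A - monomial_poly B :: 'a mpoly)) {A, B}"
    by (rule FS_eq) (use True assms in \<open>auto simp: keys_mp_diff\<close>)
  also have "\<dots> = 0" using assms(1)
    by (simp add: monomial_poly_def lookup_minus lookup_single when_def)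
  finally show ?thesis .
next
  case False
  have "FS (monomial_poly A - monomial_poly B :: 'a mpoly) S
     = sum (Poly_Mapping.lookup (monomial_poly A - monomial_poly B :: 'a mpoly)) {}"
    by (rule FS_eq) (use False assms in \<open>auto simp: keys_mp_diff\<close>)
  then show ?thesis by simp
qed

lemma FS_I2:
  "f \<in> ideal_gen n (minors2 n) \<Longrightarrow> FS f {w. rs n w = \<rho> \<and> cs n w = \<gamma>} = 0"
proof (induction arbitrary: \<rho> \<gamma> rule: ideal_gen.induct)
  case zero
  then show ?case by simp
next
  case (gen g)
  then obtain i j h k where ijhk: "1 \<le> i" "i < h" "h \<le> n" "1 \<le> j" "j < k" "k \<le> n"
      "g = monomial_poly (pm (i,j) (h,k)) - monomial_poly (pm (i,k) (h,j))"
    using minor_form by blast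
  have r: "rs n (pm (i,j) (h,k)) = rs n (pm (i,k) (h,j))"
    using ijhk by (auto simp: rs_pm fun_eq_iff)
  have c: "cs n (pm (i,j) (h,k)) = cs n (pm (i,k) (h,j))"
    using ijhk by (auto simp: cs_pm fun_eq_iff)
  show ?case unfolding ijhk(7)
    by (rule FS_diff) (use pm_ne[OF ijhk(2) ijhk(5)] r c in auto)
next
  case (add a b)
  then show ?case by (simp add: FS_add)
next
  case (mult q a)
  have "FS a {r. l + r \<in> {w. rs n w = \<rho> \<and> cs n w = \<gamma>}} = 0" for l
  proof (cases "\<exists>r0. rs n (l + r0) = \<rho> \<and> cs n (l + r0) = \<gamma>")
    case True
    then obtain r0 where r0: "rs n (l + r0) = \<rho>" "cs n (l + r0) = \<gamma>" by blast
    have "{r. l + r \<in> {w. rs n w = \<rho> \<and> cs n w = \<gamma>}} = {w. rs n w = rs n r0 \<and> cs n w = cs n r0}"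
      unfolding r0[symmetric] by (auto simp: fun_eq_iff rs_add cs_add)
    then show ?thesis using mult.IH by simp
  next
    case False
    then have "{r. l + r \<in> {w. rs n w = \<rho> \<and> cs n w = \<gamma>}} = {}" by auto
    then show ?thesis unfolding FS_def by (metis inf_bot_right sum.empty)
  qed
  then show ?case by (simp add: FS_mult)
qed


lemma finite_matvars: "finite (matvars n)" unfolding matvars_def by simp

context
  fixes n :: nat and R :: "var \<Rightarrow> var \<Rightarrow> bool"
  assumes total: "strict_total_on (matvars n) R"
    and diag_below: "\<And>i a b. (i, i) \<in> matvars n \<Longrightarrow> (a, b) \<in> matvars n \<Longrightarrow> a \<noteq> b \<Longrightarrow> R (i, i) (a, b)"
    and offdiag: "\<And>i j h k. (i, j) \<in> matvars n \<Longrightarrow> (h, k) \<in> matvars n \<Longrightarrow> i \<noteq> j \<Longrightarrow> h \<noteq> k \<Longrightarrow>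
        \<bar>int i - int j\<bar> < \<bar>int h - int k\<bar> \<Longrightarrow> R (h, k) (i, j)"
begin

lemma gen_data:
  assumes g: "g \<in> hmons n"
  shows "\<exists>g'. g \<noteq> g' \<and> rs n g' = rs n g \<and> cs n g' = cs n g \<and> revlex_less (matvars n) R g' g \<and>
     Poly_Mapping.keys g \<subseteq> matvars n \<and> Poly_Mapping.keys g' \<subseteq> matvars n \<and>
     (monomial_poly g - monomial_poly g' \<in> minors2 n \<or> monomial_poly g' - monomial_poly g \<in> minors2 n)"
proof -
  have common: "pm (i,j) (h,k) \<noteq> pm (i,k) (h,j) \<and> rs n (pm (i,j) (h,k)) = rs n (pm (i,k) (h,j)) \<and>
      cs n (pm (i,j) (h,k)) = cs n (pm (i,k) (h,j)) \<and>
      Poly_Mapping.keys (pm (i,j) (h,k)) \<subseteq> matvars n \<and> Poly_Mapping.keys (pm (i,k) (h,j)) \<subseteq> matvars n \<and>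
      monomial_poly (pm (i,j) (h,k)) - monomial_poly (pm (i,k) (h,j)) \<in> minors2 n"
    if ijhk: "1 \<le> i" "i < h" "h \<le> n" "1 \<le> j" "j < k" "k \<le> n" for i j h k
  proof (intro conjI)
    show "pm (i,j) (h,k) \<noteq> pm (i,k) (h,j)" using pm_ne ijhk by blast
    show "rs n (pm (i,j) (h,k)) = rs n (pm (i,k) (h,j))" using ijhk by (auto simp: rs_pm fun_eq_iff)
    show "cs n (pm (i,j) (h,k)) = cs n (pm (i,k) (h,j))" using ijhk by (auto simp: cs_pm fun_eq_iff)
    show "Poly_Mapping.keys (pm (i,j) (h,k)) \<subseteq> matvars n" "Poly_Mapping.keys (pm (i,k) (h,j)) \<subseteq> matvars n"
      unfolding keys_pm matvars_def using ijhk by auto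
    show "monomial_poly (pm (i,j) (h,k)) - monomial_poly (pm (i,k) (h,j)) \<in> minors2 n"
      unfolding minors2_def X_mult using ijhk by blast
  qed
  have mv: "(a, b) \<in> matvars n" if "1 \<le> a" "a \<le> n" "1 \<le> b" "b \<le> n" for a b
    using that by (simp add: matvars_def)
  from g consider
      (t1) i j h k where "1 \<le> i" "i < h" "h \<le> n" "1 \<le> j" "j < k" "k \<le> n" "i = j \<or> h = k" "g = pm (i,k) (h,j)"
    | (t2) i j h k where "1 \<le> i" "i < h" "h \<le> n" "1 \<le> j" "j < k" "k \<le> n" "i \<noteq> j" "h \<noteq> k" "g = pm (i,j) (h,k)"
    unfolding hmons_def by blast
  then show ?thesis
  proof cases
    case t1
    note c = common[OF t1(1-6)]
    have V: "(i,k) \<in> matvars n" "(h,j) \<in> matvars n" "(i,j) \<in> matvars n" "(h,k) \<in> matvars n"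
      using t1 by (auto intro!: mv)
    have "revlex_less (matvars n) R (pm (i,j) (h,k)) (pm (i,k) (h,j))"
    proof (cases "i = j")
      case True
      show ?thesis
      proof (rule rl_pm[OF total V(1,2,3,4), of "(i,j)"])
        show "R (i, j) (i, k)" using diag_below[of i i k] V True t1 by auto
        show "R (i, j) (h, j)" using diag_below[of i h i] V True t1 by auto
      qed (use t1 in auto)
    next
      case False
      then have hk: "h = k" using t1 by blast
      show ?thesis
      proof (rule rl_pm[OF total V(1,2,3,4), of "(h,k)"])
        show "R (h, k) (i, k)" using diag_below[of h i h] V hk t1 by auto
        show "R (h, k) (h, j)" using diag_below[of h h j] V hk t1 by auto
      qed (use t1 in auto)
    qed
    then show ?thesis using c t1(8) by metis
  next
    case t2
    note c = common[OF t2(1-6)]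
    have V: "(i,j) \<in> matvars n" "(h,k) \<in> matvars n" "(i,k) \<in> matvars n" "(h,j) \<in> matvars n"
      using t2 by (auto intro!: mv)
    have "revlex_less (matvars n) R (pm (i,k) (h,j)) (pm (i,j) (h,k))"
    proof (cases "i = k")
      case True
      show ?thesis
      proof (rule rl_pm[OF total V(1,2,3,4), of "(i,k)"])
        show "R (i, k) (i, j)" using diag_below[of i i j] V True t2 by auto
        show "R (i, k) (h, k)" using diag_below[of i h k] V True t2 by auto
      qed (use t2 in auto)
    next
      case ik: False
      show ?thesis
      proof (cases "h = j")
        case True
        show ?thesis
        proof (rule rl_pm[OF total V(1,2,3,4), of "(h,j)"])
          show "R (h, j) (i, j)" using diag_below[of h i j] V True t2 by auto
          show "R (h, j) (h, k)" using diag_below[of h h k] V True t2 by auto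
        qed (use t2 in auto)
      next
        case hj: False
        from dist_lemma[OF t2(2) t2(5)] show ?thesis
        proof
          assume d: "\<bar>int i - int j\<bar> < \<bar>int i - int k\<bar> \<and> \<bar>int h - int k\<bar> < \<bar>int i - int k\<bar>"
          show ?thesis
          proof (rule rl_pm[OF total V(1,2,3,4), of "(i,k)"])
            show "R (i, k) (i, j)" using offdiag[of i j i k] V d t2 ik by auto
            show "R (i, k) (h, k)" using offdiag[of h k i k] V d t2 ik by auto
          qed (use t2 in auto)
        next
          assume d: "\<bar>int i - int j\<bar> < \<bar>int h - int j\<bar> \<and> \<bar>int h - int k\<bar> < \<bar>int h - int j\<bar>"
          show ?thesis
          proof (rule rl_pm[OF total V(1,2,3,4), of "(h,j)"])
            show "R (h, j) (i, j)" using offdiag[of i j h j] V d t2 hj by auto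
            show "R (h, j) (h, k)" using offdiag[of h k h j] V d t2 hj by auto
          qed (use t2 in auto)
        qed
      qed
    qed
    then show ?thesis using c t2(9) by metis
  qed
qed

lemma fiber_finite:
  "finite {w. Poly_Mapping.keys w \<subseteq> matvars n \<and> rs n w = rs n m \<and> cs n w = cs n m}"
proof -
  define N where "N = (\<Sum>t\<in>{1..n}. rs n m t)"
  define G where "G = {w. Poly_Mapping.keys w \<subseteq> matvars n \<and> (\<forall>x. lk w x \<le> N)}"
  have sub: "{w. Poly_Mapping.keys w \<subseteq> matvars n \<and> rs n w = rs n m \<and> cs n w = cs n m} \<subseteq> G"
  proof
    fix w assume w: "w \<in> {w. Poly_Mapping.keys w \<subseteq> matvars n \<and> rs n w = rs n m \<and> cs n w = cs n m}"
    have "lk w x \<le> N" for x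
    proof (cases "x \<in> Poly_Mapping.keys w")
      case True
      obtain a b where x: "x = (a, b)" by (cases x)
      have ab: "a \<in> {1..n}" "b \<in> {1..n}" using True w x by (auto simp: matvars_def)
      have "lk w (a, b) \<le> rs n w a" by (rule lk_le_rs[OF ab(2)])
      also have "\<dots> = rs n m a" using w by simp
      also have "\<dots> \<le> N" unfolding N_def by (rule member_le_sum) (use ab in auto)
      finally show ?thesis using x by simp
    next
      case False
      then show ?thesis by (simp add: in_keys_iff)
    qed
    then show "w \<in> G" using w unfolding G_def by blast
  qed
  have "Poly_Mapping.lookup ` G \<subseteq> {f. \<forall>x. (x \<in> matvars n \<longrightarrow> f x \<in> {0..N}) \<and> (x \<notin> matvars n \<longrightarrow> f x = 0)}"
  proof
    fix f assume "f \<in> Poly_Mapping.lookup ` G"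
    then obtain w where w: "w \<in> G" "f = lk w" by blast
    show "f \<in> {f. \<forall>x. (x \<in> matvars n \<longrightarrow> f x \<in> {0..N}) \<and> (x \<notin> matvars n \<longrightarrow> f x = 0)}"
    proof (intro CollectI allI conjI impI)
      fix x assume "x \<in> matvars n"
      have "lk w x \<le> N" using w(1) unfolding G_def by blast
      then show "f x \<in> {0..N}" using w(2) by simp
    next
      fix x assume "x \<notin> matvars n"
      then have "x \<notin> Poly_Mapping.keys w" using w unfolding G_def by blast
      then show "f x = 0" using w by (simp add: in_keys_iff)
    qed
  qed
  moreover have "finite {f. \<forall>x. (x \<in> matvars n \<longrightarrow> f x \<in> {0..N}) \<and> (x \<notin> matvars n \<longrightarrow> (f x::nat) = 0)}"
    by (rule finite_set_of_finite_funs) (simp_all add: finite_matvars)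
  ultimately have "finite (Poly_Mapping.lookup ` G)" by (rule finite_subset)
  moreover have "inj_on Poly_Mapping.lookup G" by (rule inj_onI) (simp add: poly_mapping_eqI)
  ultimately have "finite G" by (rule finite_imageD)
  then show ?thesis using sub by (rule finite_subset[rotated])
qed

lemma std_min:
  assumes sm: "stdm n m" and km: "Poly_Mapping.keys m \<subseteq> matvars n"
    and kw: "Poly_Mapping.keys w \<subseteq> matvars n" and rw: "rs n w = rs n m" and cw: "cs n w = cs n m"
    and ne: "w \<noteq> m"
  shows "revlex_less (matvars n) R m w"
proof -
  define F where "F = {w. Poly_Mapping.keys w \<subseteq> matvars n \<and> rs n w = rs n m \<and> cs n w = cs n m}"
  have "\<exists>x\<in>F. \<forall>y\<in>F. \<not> revlex_less (matvars n) R y x"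
  proof (rule min_exists)
    show "finite F" unfolding F_def by (rule fiber_finite)
    show "F \<noteq> {}" using km unfolding F_def by blast
    show "revlex_less (matvars n) R x z" if "revlex_less (matvars n) R x y" "revlex_less (matvars n) R y z" for x y z
      using rl_trans[OF total that] .
    show "\<not> revlex_less (matvars n) R x x" for x by (rule rl_irr[OF total])
  qed
  then obtain \<mu> where mu: "\<mu> \<in> F" "\<forall>y\<in>F. \<not> revlex_less (matvars n) R y \<mu>" by blast
  have smu: "stdm n \<mu>"
  proof (rule ccontr)
    assume "\<not> stdm n \<mu>"
    then obtain u g where ug: "g \<in> hmons n" "\<mu> = u + g" unfolding stdm_def by blast
    obtain g' where g': "g \<noteq> g'" "rs n g' = rs n g" "cs n g' = cs n g" "revlex_less (matvars n) R g' g"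
      "Poly_Mapping.keys g' \<subseteq> matvars n"
      using gen_data[OF ug(1)] by blast
    have "Poly_Mapping.keys \<mu> \<subseteq> matvars n" using mu(1) unfolding F_def by blast
    then have ku: "Poly_Mapping.keys u \<subseteq> matvars n" unfolding ug(2) keys_sum_sub by blast
    have "u + g' \<in> F"
    proof -
      have "Poly_Mapping.keys (u + g') \<subseteq> matvars n" unfolding keys_sum_sub using ku g'(5) by blast
      moreover have "rs n (u + g') = rs n m"
      proof
        fix t
        have "rs n (u + g') t = rs n (u + g) t" by (simp add: rs_add g'(2))
        also have "\<dots> = rs n m t" using mu(1) ug(2) unfolding F_def by simp
        finally show "rs n (u + g') t = rs n m t" .
      qed
      moreover have "cs n (u + g') = cs n m"
      proof
        fix t
        have "cs n (u + g') t = cs n (u + g) t" by (simp add: cs_add g'(3))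
        also have "\<dots> = cs n m t" using mu(1) ug(2) unfolding F_def by simp
        finally show "cs n (u + g') t = cs n m t" .
      qed
      ultimately show ?thesis unfolding F_def by blast
    qed
    moreover have "revlex_less (matvars n) R (u + g') \<mu>" unfolding ug(2) by (rule rl_mult[OF total g'(4)])
    ultimately show False using mu(2) by blast
  qed
  have "\<mu> = m"
    by (rule std_inj) (use mu(1) km smu sm in \<open>auto simp: F_def\<close>)
  have wF: "w \<in> F" using kw rw cw unfolding F_def by blast
  have "revlex_less (matvars n) R w m \<or> revlex_less (matvars n) R m w"
    by (rule rl_total[OF total finite_matvars kw km ne])
  then show ?thesis using mu(2) wF \<open>\<mu> = m\<close> by blast
qed

theorem main: "initial_ideal n R (I2 n :: ('a::field) mpoly set) = H2 n"
proof
  show "initial_ideal n R (I2 n :: 'a mpoly set) \<subseteq> H2 n"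
    unfolding initial_ideal_def H2_def
  proof (rule ideal_gen_sub, rule subsetI)
    fix x :: "'a mpoly"
    assume "x \<in> {monomial_poly (lead_mon (matvars n) R f) |f. f \<in> (I2 n :: 'a mpoly set) \<and> f \<noteq> 0}"
    then obtain f :: "'a mpoly" where f: "x = monomial_poly (lead_mon (matvars n) R f)" "f \<in> I2 n" "f \<noteq> 0" by blast
    have fI: "f \<in> ideal_gen n (minors2 n)" using f(2) unfolding I2_def .
    have fp: "\<forall>m\<in>Poly_Mapping.keys f. Poly_Mapping.keys m \<subseteq> matvars n"
      using ideal_polyring[OF fI] unfolding polyring_def by simp
    have "\<exists>x\<in>Poly_Mapping.keys f. \<forall>y\<in>Poly_Mapping.keys f. \<not> revlex_less (matvars n) R x y"
    proof (rule min_exists)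
      show "finite (Poly_Mapping.keys f)" by simp
      show "Poly_Mapping.keys f \<noteq> {}" using f(3) by simp
      show "revlex_less (matvars n) R z x" if "revlex_less (matvars n) R y x" "revlex_less (matvars n) R z y" for x y z
        using rl_trans[OF total that(2) that(1)] .
      show "\<not> revlex_less (matvars n) R x x" for x by (rule rl_irr[OF total])
    qed
    then obtain m where m: "m \<in> Poly_Mapping.keys f" "\<forall>y\<in>Poly_Mapping.keys f. \<not> revlex_less (matvars n) R m y" by blast
    have km: "Poly_Mapping.keys m \<subseteq> matvars n" using fp m(1) by blast
    have mx: "\<forall>m'\<in>Poly_Mapping.keys f. m' \<noteq> m \<longrightarrow> revlex_less (matvars n) R m' m"
    proof (intro ballI impI)
      fix m' assume "m' \<in> Poly_Mapping.keys f" "m' \<noteq> m"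
      then show "revlex_less (matvars n) R m' m"
        using rl_total[OF total finite_matvars, of m' m] fp m by blast
    qed
    have lead: "lead_mon (matvars n) R f = m" by (rule lead_eq[OF total m(1) mx])
    have nstd: "\<not> stdm n m"
    proof
      assume sm: "stdm n m"
      define Bm where "Bm = {w. rs n w = rs n m \<and> cs n w = cs n m}"
      have FS0: "FS f Bm = 0" unfolding Bm_def by (rule FS_I2[OF fI])
      show False
      proof (cases "Poly_Mapping.keys f \<inter> Bm = {m}")
        case True
        then have "FS f Bm = Poly_Mapping.lookup f m" unfolding FS_def by simp
        moreover have "Poly_Mapping.lookup f m \<noteq> 0" using m(1) by (simp add: in_keys_iff)
        ultimately show False using FS0 by simp
      next
        case False
        have "m \<in> Poly_Mapping.keys f \<inter> Bm" using m(1) unfolding Bm_def by blast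
        then obtain m' where m': "m' \<in> Poly_Mapping.keys f" "m' \<in> Bm" "m' \<noteq> m" using False by blast
        have "revlex_less (matvars n) R m m'"
          by (rule std_min[OF sm km]) (use m' fp in \<open>auto simp: Bm_def\<close>)
        moreover have "revlex_less (matvars n) R m' m" using mx m' by blast
        ultimately show False using rl_asym[OF total] by blast
      qed
    qed
    then obtain u g where ug: "g \<in> hmons n" "m = u + g" unfolding stdm_def by blast
    have "x = monomial_poly u * monomial_poly g"
      unfolding f(1) lead ug(2) by (simp add: monomial_poly_def mult_single)
    moreover have "monomial_poly u \<in> (polyring n :: 'a mpoly set)"
    proof -
      have "Poly_Mapping.keys u \<subseteq> matvars n" using km ug(2) keys_sum_sub by blast
      then show ?thesis unfolding polyring_def monomial_poly_def by simp
    qed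
    moreover have "monomial_poly g \<in> (H2_gens n :: 'a mpoly set)" unfolding H2_gens_eq using ug(1) by blast
    ultimately show "x \<in> ideal_gen n (H2_gens n)" by (auto intro: ideal_gen.intros)
  qed
next
  show "H2 n \<subseteq> initial_ideal n R (I2 n :: 'a mpoly set)"
    unfolding initial_ideal_def H2_def
  proof (rule ideal_gen_sub, rule subsetI)
    fix x :: "'a mpoly" assume "x \<in> H2_gens n"
    then obtain g where g: "g \<in> hmons n" "x = monomial_poly g" unfolding H2_gens_eq by blast
    obtain g' where g': "g \<noteq> g'" "revlex_less (matvars n) R g' g"
      "monomial_poly g - monomial_poly g' \<in> (minors2 n :: 'a mpoly set) \<or> monomial_poly g' - monomial_poly g \<in> (minors2 n :: 'a mpoly set)"
      using gen_data[OF g(1)] by blast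
    obtain f :: "'a mpoly" where f: "f \<in> minors2 n" "Poly_Mapping.keys f = {g, g'}"
    proof (cases "monomial_poly g - monomial_poly g' \<in> (minors2 n :: 'a mpoly set)")
      case True
      then show ?thesis using that keys_mp_diff[OF g'(1)] by blast
    next
      case False
      then have "monomial_poly g' - monomial_poly g \<in> (minors2 n :: 'a mpoly set)" using g'(3) by blast
      moreover have "Poly_Mapping.keys (monomial_poly g' - monomial_poly g :: 'a mpoly) = {g, g'}"
        using keys_mp_diff[of g' g] g'(1) by auto
      ultimately show ?thesis using that by blast
    qed
    have fI: "f \<in> I2 n" unfolding I2_def using f(1) by (rule ideal_gen.gen)
    have f0: "f \<noteq> 0" using f(2) by auto
    have "lead_mon (matvars n) R f = g"
      by (rule lead_eq[OF total]) (use f(2) g'(2) in auto)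
    then have "x \<in> {monomial_poly (lead_mon (matvars n) R f) |f. f \<in> (I2 n :: 'a mpoly set) \<and> f \<noteq> 0}"
      using g(2) fI f0 by blast
    then show "x \<in> ideal_gen n {monomial_poly (lead_mon (matvars n) R f) |f. f \<in> (I2 n :: 'a mpoly set) \<and> f \<noteq> 0}"
      by (rule ideal_gen.gen)
  qed
qed

end


theorem proposition4p1:
  fixes n :: nat and R :: "var \<Rightarrow> var \<Rightarrow> bool"
  assumes n: "n \<ge> 2"
    and total: "strict_total_on (matvars n) R"
    and diag_chain: "\<And>i. 1 \<le> i \<Longrightarrow> i < n \<Longrightarrow> R (i, i) (i + 1, i + 1)"
    and diag_below: "\<And>i a b. (i, i) \<in> matvars n \<Longrightarrow> (a, b) \<in> matvars n \<Longrightarrow> a \<noteq> b \<Longrightarrow> R (i, i) (a, b)"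
    and offdiag: "\<And>i j h k. (i, j) \<in> matvars n \<Longrightarrow> (h, k) \<in> matvars n \<Longrightarrow> i \<noteq> j \<Longrightarrow> h \<noteq> k \<Longrightarrow>
        \<bar>int i - int j\<bar> < \<bar>int h - int k\<bar> \<Longrightarrow> R (h, k) (i, j)"
  shows "initial_ideal n R (I2 n :: ('a::field) mpoly set) = H2 n"
  by (rule main[OF total diag_below offdiag])

end
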